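(* Let $X$ be a compact metric space, $f\colon X\to X$ a chain transitive continuous map and $D\in\mathcal{D}(f)$. Suppose that for any $\epsilon>0$ there is $\delta>0$ such that every $\delta$-pseudo orbit $(x_i)_{i\ge0}$ of $f$ with $x_0\in D$ is $\epsilon$-shadowed by some $x\in D$. Then for any $y,z\in D$ and $\epsilon>0$ there is $w\in D$ such that $d(z,w)\le\epsilon$ and $\limsup_{k\to\infty}d(f^k(y),f^k(w))\le\epsilon$.
   Context: A $\delta$-chain of $f$ is a finite sequence $(x_i)_{i=0}^k$, $k>0$, with $d(f(x_i),x_{i+1})\le\delta$ for all $i<k$; it is a $\delta$-cycle of length $k$ if $x_0=x_k$. $f$ is chain transitive if for all $x,y\in X$ and $\delta>0$ there is a $\delta$-chain from $x$ to $y$. For $\delta>0$, $m(f,\delta)$ is the gcd of the lengths of $\delta$-cycles; $x\sim_{f,\delta}y$ iff there is a $\delta$-chain from $x$ to $y$ whose length is divisible by $m(f,\delta)$; $x\sim_f y$ iff $x\sim_{f,\delta}y$ for all $\delta>0$; $\mathcal{D}(f)$ is the set of equivalence classes of $\sim_f$. A $\delta$-pseudo orbit is a sequence $(x_i)_{i\ge0}$ with $d(f(x_i),x_{i+1})\le\delta$ for all $i\ge0$; it is $\epsilon$-shadowed by $x$ if $d(f^i(x),x_i)\le\epsilon$ for all $i\ge0$. *)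

theory Defs
  imports "HOL-Analysis.Analysis"
begin

text \<open>The compact metric space X is a compact subset of a metric space type;
  all chains and pseudo orbits are required to lie in X.\<close>

definition is_delta_chain :: "'a::metric_space set \<Rightarrow> ('a \<Rightarrow> 'a) \<Rightarrow> real \<Rightarrow> nat \<Rightarrow> (nat \<Rightarrow> 'a) \<Rightarrow> bool" where
  "is_delta_chain X f \<delta> k xs \<longleftrightarrow> k > 0 \<and> (\<forall>i\<le>k. xs i \<in> X) \<and>
     (\<forall>i<k. dist (f (xs i)) (xs (Suc i)) \<le> \<delta>)"

definition chain_from_to :: "'a::metric_space set \<Rightarrow> ('a \<Rightarrow> 'a) \<Rightarrow> real \<Rightarrow> nat \<Rightarrow> 'a \<Rightarrow> 'a \<Rightarrow> bool" where
  "chain_from_to X f \<delta> k x y \<longleftrightarrow> (\<exists>xs. is_delta_chain X f \<delta> k xs \<and> xs 0 = x \<and> xs k = y)"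

definition chain_transitive :: "'a::metric_space set \<Rightarrow> ('a \<Rightarrow> 'a) \<Rightarrow> bool" where
  "chain_transitive X f \<longleftrightarrow> (\<forall>x\<in>X. \<forall>y\<in>X. \<forall>\<delta>>0. \<exists>k. chain_from_to X f \<delta> k x y)"

definition is_delta_cycle :: "'a::metric_space set \<Rightarrow> ('a \<Rightarrow> 'a) \<Rightarrow> real \<Rightarrow> nat \<Rightarrow> (nat \<Rightarrow> 'a) \<Rightarrow> bool" where
  "is_delta_cycle X f \<delta> k xs \<longleftrightarrow> is_delta_chain X f \<delta> k xs \<and> xs 0 = xs k"

definition cycle_gcd :: "'a::metric_space set \<Rightarrow> ('a \<Rightarrow> 'a) \<Rightarrow> real \<Rightarrow> nat" where
  "cycle_gcd X f \<delta> = Gcd {k. \<exists>xs. is_delta_cycle X f \<delta> k xs}"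

definition rel_delta :: "'a::metric_space set \<Rightarrow> ('a \<Rightarrow> 'a) \<Rightarrow> real \<Rightarrow> 'a \<Rightarrow> 'a \<Rightarrow> bool" where
  "rel_delta X f \<delta> x y \<longleftrightarrow> (\<exists>k. cycle_gcd X f \<delta> dvd k \<and> chain_from_to X f \<delta> k x y)"

definition rel_f :: "'a::metric_space set \<Rightarrow> ('a \<Rightarrow> 'a) \<Rightarrow> 'a \<Rightarrow> 'a \<Rightarrow> bool" where
  "rel_f X f x y \<longleftrightarrow> (\<forall>\<delta>>0. rel_delta X f \<delta> x y)"

definition classes_D :: "'a::metric_space set \<Rightarrow> ('a \<Rightarrow> 'a) \<Rightarrow> 'a set set" where
  "classes_D X f = X // {(x, y). x \<in> X \<and> y \<in> X \<and> rel_f X f x y}"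

definition pseudo_orbit :: "'a::metric_space set \<Rightarrow> ('a \<Rightarrow> 'a) \<Rightarrow> real \<Rightarrow> (nat \<Rightarrow> 'a) \<Rightarrow> bool" where
  "pseudo_orbit X f \<delta> xs \<longleftrightarrow> (\<forall>i. xs i \<in> X) \<and> (\<forall>i. dist (f (xs i)) (xs (Suc i)) \<le> \<delta>)"

definition shadowed_by :: "('a::metric_space \<Rightarrow> 'a) \<Rightarrow> real \<Rightarrow> (nat \<Rightarrow> 'a) \<Rightarrow> 'a \<Rightarrow> bool" where
  "shadowed_by f \<epsilon> xs x \<longleftrightarrow> (\<forall>i. dist ((f ^^ i) x) (xs i) \<le> \<epsilon>)"

end

theory Submission
  imports Defs
begin

lemma chain_concat:
  assumes "chain_from_to X f d k1 a b" "chain_from_to X f d k2 b c"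
  shows "chain_from_to X f d (k1 + k2) a c"
proof -
  obtain xs where xs: "is_delta_chain X f d k1 xs" "xs 0 = a" "xs k1 = b"
    using assms(1) unfolding chain_from_to_def by blast
  obtain ys where ys: "is_delta_chain X f d k2 ys" "ys 0 = b" "ys k2 = c"
    using assms(2) unfolding chain_from_to_def by blast
  define zs where "zs = (\<lambda>i. if i \<le> k1 then xs i else ys (i - k1))"
  have "is_delta_chain X f d (k1 + k2) zs"
    unfolding is_delta_chain_def
  proof (intro conjI allI impI)
    show "0 < k1 + k2" using xs(1) unfolding is_delta_chain_def by simp
  next
    fix i assume "i \<le> k1 + k2"
    then show "zs i \<in> X" using xs(1) ys(1) unfolding is_delta_chain_def zs_def by auto
  next
    fix i assume i: "i < k1 + k2"
    show "dist (f (zs i)) (zs (Suc i)) \<le> d"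
    proof (cases "i < k1")
      case True
      then show ?thesis using xs(1) unfolding is_delta_chain_def zs_def by auto
    next
      case False
      then have "zs i = ys (i - k1)" "zs (Suc i) = ys (Suc (i - k1))"
        using xs(3) ys(2) unfolding zs_def by (auto simp: Suc_diff_le)
      moreover have "i - k1 < k2" using i False by simp
      ultimately show ?thesis using ys(1) unfolding is_delta_chain_def by auto
    qed
  qed
  moreover have "zs 0 = a" "zs (k1 + k2) = c"
    using xs ys unfolding zs_def is_delta_chain_def by auto
  ultimately show ?thesis unfolding chain_from_to_def by blast
qed

lemma chain_mult:
  assumes "chain_from_to X f d c q q" "n \<ge> 1"
  shows "chain_from_to X f d (n * c) q q"
  using assms(2)
proof (induction n rule: dec_induct)
  case base then show ?case using assms(1) by simp
next
  case (step n)
  then show ?case using chain_concat[OF step(3) assms(1)] by (simp add: add.commute)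
qed

lemma least_diff_dvd:
  fixes C :: "nat set"
  assumes cl: "\<And>a b. a \<in> C \<Longrightarrow> b \<in> C \<Longrightarrow> a + b \<in> C"
    and a0: "a0 \<in> C" and b0: "b0 \<in> C" and ab: "a0 = b0 + g" and gpos: "g > 0"
    and mn: "\<And>e a b. a \<in> C \<Longrightarrow> b \<in> C \<Longrightarrow> a = b + e \<Longrightarrow> e > 0 \<Longrightarrow> g \<le> e"
  shows "x1 \<in> C \<Longrightarrow> y1 \<in> C \<Longrightarrow> x1 = y1 + e \<Longrightarrow> g dvd e"
proof (induction e arbitrary: x1 y1 rule: less_induct)
  case (less e)
  show ?case
  proof (cases "e = 0")
    case True then show ?thesis by simp
  next
    case False
    then have "g \<le> e" using mn less.prems by blast
    then obtain e' where e': "e = g + e'" using le_Suc_ex by blast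
    have "x1 + b0 = (y1 + a0) + e'" using less.prems(3) ab e' by simp
    moreover have "x1 + b0 \<in> C" "y1 + a0 \<in> C" using cl less.prems a0 b0 by auto
    moreover have "e' < e" using e' gpos by simp
    ultimately have "g dvd e'" using less.IH by blast
    then show ?thesis using e' by simp
  qed
qed

lemma semigroup_fill:
  fixes C :: "nat set"
  assumes cl: "\<And>a b. a \<in> C \<Longrightarrow> b \<in> C \<Longrightarrow> a + b \<in> C"
    and mult: "\<And>n c. c \<in> C \<Longrightarrow> n \<ge> 1 \<Longrightarrow> n * c \<in> C"
    and a: "a \<in> C" and b: "b \<in> C" and ab: "a = b + g" and gpos: "g > 0" and bpos: "b > 0"
    and gb: "g dvd b" and gV: "g dvd V" and V: "V \<ge> b * b"
  shows "V \<in> C"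
proof -
  define q where "q = V div b"
  define r where "r = (V mod b) div g"
  have "g dvd V mod b" using gb gV by (simp add: dvd_mod)
  then have rg: "r * g = V mod b" unfolding r_def by simp
  have "V mod b < b" using bpos by simp
  then have "r * g < b" using rg by simp
  moreover have "r \<le> r * g" using gpos by simp
  ultimately have rb: "r < b" by linarith
  have "q \<ge> b" unfolding q_def using div_le_mono[OF V, of b] bpos by simp
  then have rq: "r \<le> q" using rb by simp
  have "V = q * b + V mod b" unfolding q_def by simp
  also have "... = (q - r) * b + r * a" proof -
    have "(q - r) * b + r * b = q * b" using rq by (metis add_mult_distrib le_add_diff_inverse2)
    moreover have "r * a = r * b + r * g" using ab by (simp add: algebra_simps)
    ultimately show ?thesis using rg by simp
  qed
  finally have Veq: "V = (q - r) * b + r * a" .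
  show ?thesis
  proof (cases "r = 0")
    case True
    then show ?thesis using Veq mult[OF b, of q] \<open>q \<ge> b\<close> bpos by simp
  next
    case False
    show ?thesis
    proof (cases "q - r = 0")
      case True
      then show ?thesis using Veq mult[OF a, of r] False by simp
    next
      case F2: False
      then show ?thesis using Veq mult[OF a, of r] mult[OF b, of "q - r"] False cl by simp
    qed
  qed
qed

lemma chain_in:
  assumes "chain_from_to X f d k a b"
  shows "a \<in> X" "b \<in> X" "k > 0"
  using assms unfolding chain_from_to_def is_delta_chain_def by auto

lemma funpow_in:
  assumes "f ` X \<subseteq> X" "u \<in> X"
  shows "(f ^^ n) u \<in> X"
  by (induction n) (use assms in auto)

lemma jump_chain:
  assumes "f ` X \<subseteq> X" "u \<in> X" "v \<in> X" "d \<ge> 0" "s \<ge> 1"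
    and "dist ((f ^^ s) u) v \<le> d"
  shows "chain_from_to X f d s u v"
proof -
  define xs where "xs = (\<lambda>i. if i < s then (f ^^ i) u else v)"
  have "is_delta_chain X f d s xs"
    unfolding is_delta_chain_def
  proof (intro conjI allI impI)
    show "0 < s" using assms by simp
  next
    fix i assume "i \<le> s"
    then show "xs i \<in> X" unfolding xs_def using funpow_in[OF assms(1,2)] assms(3) by auto
  next
    fix i assume i: "i < s"
    show "dist (f (xs i)) (xs (Suc i)) \<le> d"
    proof (cases "Suc i < s")
      case True
      then show ?thesis using i assms(4) unfolding xs_def by simp
    next
      case False
      then have "Suc i = s" using i by simp
      have "f (xs i) = (f ^^ Suc i) u" using i unfolding xs_def by simp
      moreover have "xs (Suc i) = v" unfolding xs_def using \<open>Suc i = s\<close> by simp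
      ultimately show ?thesis using assms(6) \<open>Suc i = s\<close> by simp
    qed
  qed
  moreover have "xs 0 = u" "xs s = v" using assms(5) unfolding xs_def by auto
  ultimately show ?thesis unfolding chain_from_to_def by blast
qed

theorem lemma5p3:
  fixes X :: "'a::metric_space set" and f :: "'a \<Rightarrow> 'a" and D :: "'a set"
  assumes "compact X" and "f ` X \<subseteq> X" and "continuous_on X f"
    and "chain_transitive X f"
    and "D \<in> classes_D X f"
    and "\<forall>\<epsilon>>0. \<exists>\<delta>>0. \<forall>xs. pseudo_orbit X f \<delta> xs \<and> xs 0 \<in> D \<longrightarrow>
            (\<exists>x\<in>D. shadowed_by f \<epsilon> xs x)"
  shows "\<forall>y\<in>D. \<forall>z\<in>D. \<forall>\<epsilon>>0. \<exists>w\<in>D. dist z w \<le> \<epsilon> \<and>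
            limsup (\<lambda>k. ereal (dist ((f ^^ k) y) ((f ^^ k) w))) \<le> ereal \<epsilon>"
proof (intro ballI allI impI)
  fix y z and \<epsilon> :: real
  assume yD: "y \<in> D" and zD: "z \<in> D" and ep: "\<epsilon> > 0"
  obtain \<delta> where dpos: "\<delta> > 0" and shad: "\<And>xs. pseudo_orbit X f \<delta> xs \<Longrightarrow> xs 0 \<in> D \<Longrightarrow>
      (\<exists>x\<in>D. shadowed_by f \<epsilon> xs x)"
    using assms(6) ep by blast
  obtain x where xX: "x \<in> X" and Deq: "D = {(x, y). x \<in> X \<and> y \<in> X \<and> rel_f X f x y} `` {x}"
    using assms(5) unfolding classes_D_def quotient_def by blast
  have yX: "y \<in> X" and rxy: "rel_f X f x y" using yD Deq by auto
  have zX: "z \<in> X" and rxz: "rel_f X f x z" using zD Deq by auto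
  have ct: "\<And>a b. a \<in> X \<Longrightarrow> b \<in> X \<Longrightarrow> \<exists>k. chain_from_to X f \<delta> k a b"
    using assms(4) dpos unfolding chain_transitive_def by blast
  define m where "m = cycle_gcd X f \<delta>"
  define S where "S = {k. \<exists>xs. is_delta_cycle X f \<delta> k xs}"
  have inS: "\<And>k q. chain_from_to X f \<delta> k q q \<Longrightarrow> k \<in> S"
    unfolding S_def chain_from_to_def is_delta_cycle_def by auto
  have mdvd: "\<And>k q. chain_from_to X f \<delta> k q q \<Longrightarrow> m dvd k"
    using inS unfolding m_def cycle_gcd_def S_def by (metis Gcd_dvd)
  obtain A where mA: "m dvd A" and cA: "chain_from_to X f \<delta> A x y"
    using rxy dpos unfolding rel_f_def rel_delta_def m_def by blast
  obtain B where mB: "m dvd B" and cB: "chain_from_to X f \<delta> B x z"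
    using rxz dpos unfolding rel_f_def rel_delta_def m_def by blast
  obtain C where cC: "chain_from_to X f \<delta> C z x" using ct zX xX by blast
  have "m dvd B + C" using mdvd[OF chain_concat[OF cB cC]] .
  then have mC: "m dvd C" using mB by (simp add: dvd_add_right_iff)
  define P where "P = C + A"
  have cP: "chain_from_to X f \<delta> P z y" unfolding P_def using chain_concat[OF cC cA] .
  have mP: "m dvd P" unfolding P_def using mA mC by simp
  define Cy where "Cy = {c. chain_from_to X f \<delta> c y y}"
  have cl: "\<And>a b. a \<in> Cy \<Longrightarrow> b \<in> Cy \<Longrightarrow> a + b \<in> Cy"
    unfolding Cy_def using chain_concat by blast
  have mu: "\<And>n c. c \<in> Cy \<Longrightarrow> n \<ge> 1 \<Longrightarrow> n * c \<in> Cy"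
    unfolding Cy_def using chain_mult by blast
  obtain c0 where c0: "c0 \<in> Cy" using ct yX unfolding Cy_def by blast
  have c0pos: "c0 > 0" using c0 chain_in unfolding Cy_def by blast
  define g where "g = (LEAST e. e > 0 \<and> (\<exists>a\<in>Cy. \<exists>b\<in>Cy. a = b + e))"
  have ex: "\<exists>e. e > 0 \<and> (\<exists>a\<in>Cy. \<exists>b\<in>Cy. a = b + e)"
    using c0 c0pos cl[OF c0 c0] by blast
  have gprop: "g > 0 \<and> (\<exists>a\<in>Cy. \<exists>b\<in>Cy. a = b + g)"
    unfolding g_def using LeastI_ex[OF ex] .
  then obtain a b where gpos: "g > 0" and a: "a \<in> Cy" and b: "b \<in> Cy" and ab: "a = b + g"
    by blast
  have gmin: "\<And>e a b. a \<in> Cy \<Longrightarrow> b \<in> Cy \<Longrightarrow> a = b + e \<Longrightarrow> e > 0 \<Longrightarrow> g \<le> e"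
    unfolding g_def by (rule Least_le) blast
  have L: "\<And>a' b' e. a' \<in> Cy \<Longrightarrow> b' \<in> Cy \<Longrightarrow> a' = b' + e \<Longrightarrow> g dvd e"
  proof -
    fix a' b' e assume h1: "a' \<in> Cy" and h2: "b' \<in> Cy" and h3: "a' = b' + e"
    show "g dvd e"
      by (rule least_diff_dvd[OF cl a b ab gpos gmin h1 h2 h3])
  qed
  have gdvd: "\<And>k q. chain_from_to X f \<delta> k q q \<Longrightarrow> g dvd k"
  proof -
    fix k q assume ck: "chain_from_to X f \<delta> k q q"
    have qX: "q \<in> X" using chain_in[OF ck] by simp
    obtain p1 where p1: "chain_from_to X f \<delta> p1 y q" using ct yX qX by blast
    obtain p2 where p2: "chain_from_to X f \<delta> p2 q y" using ct yX qX by blast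
    have "p1 + p2 \<in> Cy" unfolding Cy_def using chain_concat[OF p1 p2] by simp
    moreover have "p1 + k + p2 \<in> Cy" unfolding Cy_def
      using chain_concat[OF chain_concat[OF p1 ck] p2] by simp
    moreover have "p1 + k + p2 = (p1 + p2) + k" by simp
    ultimately show "g dvd k"
      using L by blast
  qed
  have gm: "g dvd m" unfolding m_def cycle_gcd_def
  proof (rule Gcd_greatest)
    fix k assume "k \<in> {k. \<exists>xs. is_delta_cycle X f \<delta> k xs}"
    then obtain xs where "is_delta_cycle X f \<delta> k xs" by blast
    then have "chain_from_to X f \<delta> k (xs 0) (xs 0)"
      unfolding is_delta_cycle_def chain_from_to_def by metis
    then show "g dvd k" using gdvd by blast
  qed
  have gP: "g dvd P" using gm mP by (rule dvd_trans)
  have gb: "g dvd b" using gdvd b unfolding Cy_def by blast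
  have bpos: "b > 0" using b chain_in unfolding Cy_def by blast
  define u where "u = (\<lambda>n. (f ^^ n) y)"
  have uX: "\<And>n. u n \<in> X" unfolding u_def using funpow_in[OF assms(2) yX] by blast
  obtain l r where "l \<in> X" and rmono: "strict_mono r" and lim: "(u \<circ> r) \<longlonglongrightarrow> l"
    using assms(1) uX unfolding compact_def by blast
  have "Cauchy (u \<circ> r)" using lim by (rule LIMSEQ_imp_Cauchy)
  then obtain M where M: "\<And>i j. i \<ge> M \<Longrightarrow> j \<ge> M \<Longrightarrow> dist ((u \<circ> r) i) ((u \<circ> r) j) < \<delta>"
    using metric_CauchyD dpos by blast
  define s where "s = r (M + 1)"
  have s1: "s \<ge> M + 1" unfolding s_def using seq_suble[OF rmono] by blast
  define j where "j = s + P + b * b"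
  define t where "t = r j"
  have tj: "t \<ge> j" unfolding t_def using seq_suble[OF rmono] by blast
  have "j > M + 1" unfolding j_def using s1 bpos cP chain_in(3) by fastforce
  then have st: "s < t" unfolding s_def t_def using rmono by (simp add: strict_mono_less)
  have dst: "dist (u s) (u t) < \<delta>" using M[of "M+1" j] \<open>j > M + 1\<close>
    unfolding s_def t_def by simp
  have "chain_from_to X f \<delta> (t - s) (u s) (u s)"
  proof (rule jump_chain[OF assms(2) uX uX])
    show "0 \<le> \<delta>" using dpos by simp
    show "1 \<le> t - s" using st by simp
    have "(f ^^ (t - s)) (u s) = u t" unfolding u_def using st
      by (metis funpow_add le_add_diff_inverse2 less_imp_le o_apply)
    then show "dist ((f ^^ (t - s)) (u s)) (u s) \<le> \<delta>" using dst by (simp add: dist_commute)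
  qed
  then have gts: "g dvd t - s" using gdvd by blast
  define V where "V = t - s - P"
  have gV: "g dvd V" unfolding V_def using dvd_diff_nat[OF gts gP] by (simp add: diff_diff_left)
  have Vb: "V \<ge> b * b" unfolding V_def using tj j_def by simp
  have VC: "V \<in> Cy" using semigroup_fill[OF cl mu a b ab gpos bpos gb gV Vb] .
  have cJ: "chain_from_to X f \<delta> s y (u t)"
  proof (rule jump_chain[OF assms(2) yX uX])
    show "0 \<le> \<delta>" using dpos by simp
    show "1 \<le> s" using s1 by simp
    show "dist ((f ^^ s) y) (u t) \<le> \<delta>" using dst unfolding u_def by simp
  qed
  have tot: "P + V + s = t" unfolding V_def using tj j_def by simp
  have "chain_from_to X f \<delta> (P + V + s) z (u t)"
    using chain_concat[OF chain_concat[OF cP VC[unfolded Cy_def, simplified]] cJ] .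
  then obtain xs where xs: "is_delta_chain X f \<delta> t xs" "xs 0 = z" "xs t = u t"
    unfolding tot chain_from_to_def by blast
  define ys where "ys = (\<lambda>i. if i \<le> t then xs i else u i)"
  have "pseudo_orbit X f \<delta> ys"
    unfolding pseudo_orbit_def
  proof (intro conjI allI)
    fix i show "ys i \<in> X" using xs(1) uX unfolding ys_def is_delta_chain_def by auto
  next
    fix i show "dist (f (ys i)) (ys (Suc i)) \<le> \<delta>"
    proof (cases "i < t")
      case True
      then show ?thesis using xs(1) unfolding ys_def is_delta_chain_def by auto
    next
      case False
      then have "ys i = u i" "ys (Suc i) = u (Suc i)" using xs(3) unfolding ys_def by auto
      then show ?thesis using dpos unfolding u_def by simp
    qed
  qed
  moreover have "ys 0 \<in> D" using xs(2) zD unfolding ys_def by simp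
  ultimately obtain w where wD: "w \<in> D" and sh: "shadowed_by f \<epsilon> ys w" using shad by blast
  have "dist z w \<le> \<epsilon>" using sh xs(2) unfolding shadowed_by_def ys_def
    by (metis bot_nat_0.extremum dist_commute funpow_0)
  moreover have "limsup (\<lambda>k. ereal (dist ((f ^^ k) y) ((f ^^ k) w))) \<le> ereal \<epsilon>"
  proof (rule Limsup_bounded)
    show "\<forall>\<^sub>F k in sequentially. ereal (dist ((f ^^ k) y) ((f ^^ k) w)) \<le> ereal \<epsilon>"
      unfolding eventually_sequentially
    proof (intro exI allI impI)
      fix k assume "t \<le> k"
      then have "ys k = (f ^^ k) y" using xs(3) unfolding ys_def u_def by auto
      then show "ereal (dist ((f ^^ k) y) ((f ^^ k) w)) \<le> ereal \<epsilon>"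
        using sh unfolding shadowed_by_def by (metis dist_commute ereal_less_eq(3))
    qed
  qed
  ultimately show "\<exists>w\<in>D. dist z w \<le> \<epsilon> \<and>
            limsup (\<lambda>k. ereal (dist ((f ^^ k) y) ((f ^^ k) w))) \<le> ereal \<epsilon>"
    using wD by blast
qed

end
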